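(* All on-site potentials of the tridiagonalized chain unitarily mapped from any chiral-symmetric system are zero for any chosen anchor site.
   Context: A chiral-symmetric system is one with a Hermitian Hamiltonian matrix $H$ (of even dimension $n$) for which there exists a position basis, split into two sublattices $A$ and $B$, such that $\Gamma H = -H\Gamma$ with $\Gamma = I_{(n/2)\times(n/2)}\otimes\sigma_z$ ($\sigma_z$ the Pauli matrix); the system may be nonlocal or higher-dimensional. The system is mapped onto a 1D chain with only nearest-neighbor couplings by an "improved Householder" tridiagonalization: one chooses an anchor site $m$ (any site of the original system), exchanges the first and $m$-th rows and the corresponding columns of $H$ via a permutation matrix $\bar V$, and then applies the standard Householder tridiagonalization (starting from the first row and column) to $\bar V^{\dagger}H\bar V$, giving a unitary $V^{*}$ with $V^{*}_{11}=1$ and a tridiagonal matrix $H^{*}_{\mathrm{eff}} = V^{*\dagger}(\bar V^{\dagger}H\bar V)V^{*}$, whose subdiagonal entries are made real and positive by elementary sign changes (diagonal entries unchanged). The overall map is unitary, $H_{\mathrm{eff}} = (\bar V V^{*})^{\dagger} H (\bar V V^{*})$, and the dynamics of the anchor site is faithfully mapped to the first site of the new chain. The on-site potentials of the tridiagonalized chain are the diagonal entries of the tridiagonal Hamiltonian. The nontrivial case in which the tridiagonalized matrix has nonzero subdiagonal elements is considered. *)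

theory Defs
  imports "Jordan_Normal_Form.Schur_Decomposition"
begin

text \<open>Matrices are complex n x n matrices (Jordan_Normal_Form), indices 0..n-1.
  Sites 0,2,4,... form sublattice A and 1,3,5,... sublattice B.\<close>

definition hermitian_mat :: "nat \<Rightarrow> complex mat \<Rightarrow> bool" where
  "hermitian_mat n H \<longleftrightarrow> H \<in> carrier_mat n n \<and> mat_adjoint H = H"

definition unitary_mat :: "nat \<Rightarrow> complex mat \<Rightarrow> bool" where
  "unitary_mat n U \<longleftrightarrow> U \<in> carrier_mat n n \<and> mat_adjoint U * U = 1\<^sub>m n \<and> U * mat_adjoint U = 1\<^sub>m n"

text \<open>Gamma = I_(n/2) (x) sigma_z = diag(1,-1,1,-1,...).\<close>
definition chiral_op :: "nat \<Rightarrow> complex mat" where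
  "chiral_op n = mat n n (\<lambda>(i,j). if i = j then (if even i then 1 else -1) else 0)"

definition chiral_symmetric :: "nat \<Rightarrow> complex mat \<Rightarrow> bool" where
  "chiral_symmetric n H \<longleftrightarrow> even n \<and> hermitian_mat n H \<and>
     chiral_op n * H = - (H * chiral_op n)"

definition swap_perm_mat :: "nat \<Rightarrow> nat \<Rightarrow> complex mat" where
  "swap_perm_mat n m = mat n n (\<lambda>(i,j).
     if (i = 0 \<and> j = m) \<or> (i = m \<and> j = 0) \<or> (i = j \<and> i \<noteq> 0 \<and> i \<noteq> m) then 1 else 0)"

definition tridiagonal :: "nat \<Rightarrow> complex mat \<Rightarrow> bool" where
  "tridiagonal n T \<longleftrightarrow> T \<in> carrier_mat n n \<and>
     (\<forall>i<n. \<forall>j<n. (j > i + 1 \<or> i > j + 1) \<longrightarrow> T $$ (i,j) = 0)"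

definition nonzero_subdiagonal :: "nat \<Rightarrow> complex mat \<Rightarrow> bool" where
  "nonzero_subdiagonal n T \<longleftrightarrow> (\<forall>i. i + 1 < n \<longrightarrow> T $$ (i+1, i) \<noteq> 0)"

end

theory Submission
  imports Defs
begin

lemma sum_single:
  assumes "finite A" "a \<in> A" "\<And>j. j \<in> A \<Longrightarrow> j \<noteq> a \<Longrightarrow> f j = 0"
  shows "sum f A = f a"
proof -
  have "sum f A = f a + sum f (A - {a})" using assms by (simp add: sum.remove)
  also have "sum f (A - {a}) = 0" using assms by (intro sum.neutral) auto
  finally show ?thesis by simp
qed

lemma key:
 fixes G T :: "complex mat" and s :: complex
 assumes comm: "\<And>i k. i<n \<Longrightarrow> k<n \<Longrightarrow> (\<Sum>j<n. G$$(i,j)*T$$(j,k)) = - (\<Sum>j<n. T$$(i,j)*G$$(j,k))"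
 and herm: "\<And>i j. i<n \<Longrightarrow> j<n \<Longrightarrow> G$$(i,j) = cnj (G$$(j,i))"
 and tri: "\<And>i j. i<n \<Longrightarrow> j<n \<Longrightarrow> (j > i+1 \<or> i > j+1) \<Longrightarrow> T$$(i,j) = 0"
 and sub: "\<And>i. i+1<n \<Longrightarrow> T$$(i+1,i) \<noteq> 0"
 and col0: "\<And>i. i<n \<Longrightarrow> G$$(i,0) = (if i=0 then s else 0)" and s: "s \<noteq> 0"
 shows "\<forall>k<n. T$$(k,k) = 0"
proof -
  have col: "\<forall>i<n. G$$(i,k) = (if i=k then (-1)^k*s else 0)" if "k<n" for k
    using that
  proof (induction k rule: less_induct)
    case (less k)
    show ?case
    proof (cases k)
      case 0 then show ?thesis using col0 by simp
    next
      case (Suc k')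
      have IH: "\<And>i' i. i' < k \<Longrightarrow> i < n \<Longrightarrow> G$$(i,i') = (if i=i' then (-1)^i'*s else 0)"
        using less by auto
      show ?thesis
      proof (intro allI impI)
        fix i assume i: "i < n"
        show "G$$(i,k) = (if i=k then (-1)^k*s else 0)"
        proof (cases "i \<le> k'")
          case True
          have ik: "i < k" using True Suc by simp
          have "G$$(k,i) = 0" using IH[OF ik less.prems] ik by simp
          moreover have "G$$(i,k) = cnj (G$$(k,i))" using herm i less.prems by blast
          ultimately show ?thesis using ik by simp
        next
          case False
          have k'n: "k' < n" using less Suc by auto
          have L: "(\<Sum>j<n. G$$(i,j)*T$$(j,k')) = G$$(i,k)*T$$(k,k')"
          proof (rule sum_single)
            fix j assume j: "j \<in> {..<n}" "j \<noteq> k"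
            show "G$$(i,j)*T$$(j,k') = 0"
            proof (cases "j < k")
              case True
              have "i \<noteq> j" using True False Suc by auto
              then have "G$$(i,j) = 0" using IH[OF True i] by simp
              then show ?thesis by simp
            next
              case False then show ?thesis using tri[of j k'] j k'n Suc by auto
            qed
          qed (use less in auto)
          have R: "(\<Sum>j<n. T$$(i,j)*G$$(j,k')) = T$$(i,k')*((-1)^k'*s)"
          proof -
            have kk: "k' < k" using Suc by simp
            have "(\<Sum>j<n. T$$(i,j)*G$$(j,k')) = T$$(i,k')*G$$(k',k')"
              by (rule sum_single) (use IH[OF kk] k'n in auto)
            then show ?thesis using IH[OF kk k'n] by simp
          qed
          have eq: "G$$(i,k)*T$$(k,k') = - (T$$(i,k')*((-1)^k'*s))"
            using comm[OF i k'n] L R by simp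
          show ?thesis
          proof (cases "i = k")
            case True
            have "T$$(k,k') \<noteq> 0" using sub[of k'] less Suc by auto
            have "G$$(k,k)*T$$(k,k') = ((-1)^k*s)*T$$(k,k')" using eq True Suc by (simp add: algebra_simps)
            then have "G$$(k,k) = (-1)^k*s" using \<open>T$$(k,k') \<noteq> 0\<close> by simp
            then show ?thesis using True by simp
          next
            case ne: False
            have "T$$(i,k') = 0" using tri[OF i k'n] ne False Suc by auto
            moreover have "T$$(k,k') \<noteq> 0" using sub[of k'] less Suc by auto
            ultimately show ?thesis using eq ne by simp
          qed
        qed
      qed
    qed
  qed
  show ?thesis
  proof (intro allI impI)
    fix k assume k: "k < n"
    have L: "(\<Sum>j<n. G$$(k,j)*T$$(j,k)) = G$$(k,k)*T$$(k,k)"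
    proof (rule sum_single)
      fix j assume "j \<in> {..<n}" "j \<noteq> k"
      then have "G$$(k,j) = 0" using col[of j] k by auto
      then show "G$$(k,j)*T$$(j,k) = 0" by simp
    qed (use k in auto)
    have R: "(\<Sum>j<n. T$$(k,j)*G$$(j,k)) = T$$(k,k)*G$$(k,k)"
    proof (rule sum_single)
      fix j assume "j \<in> {..<n}" "j \<noteq> k"
      then have "G$$(j,k) = 0" using col[OF k] by auto
      then show "T$$(k,j)*G$$(j,k) = 0" by simp
    qed (use k in auto)
    have "G$$(k,k) \<noteq> 0" using col[OF k] k s by simp
    then show "T$$(k,k) = 0" using comm[OF k k] L R by simp
  qed
qed

lemma adj_carrier: "A \<in> carrier_mat r c \<Longrightarrow> mat_adjoint A \<in> carrier_mat c r"
  unfolding mat_adjoint_def by auto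

lemma adj_dim[simp]: "dim_row (mat_adjoint A) = dim_col A" "dim_col (mat_adjoint A) = dim_row A"
  unfolding mat_adjoint_def by auto

lemma adj_idx'[simp]: "i < dim_col A \<Longrightarrow> j < dim_row A \<Longrightarrow> mat_adjoint A $$ (i,j) = cnj (A$$(j,i))"
  unfolding mat_adjoint_def by (auto simp: mat_of_rows_index)

lemma adj_idx: "A \<in> carrier_mat r c \<Longrightarrow> i < c \<Longrightarrow> j < r \<Longrightarrow> mat_adjoint A $$ (i,j) = cnj (A$$(j,i))"
  unfolding mat_adjoint_def by (auto simp: mat_of_rows_index)

lemma mult_idx: "A \<in> carrier_mat r k \<Longrightarrow> B \<in> carrier_mat k c \<Longrightarrow> i < r \<Longrightarrow> j < c \<Longrightarrow>
   (A * B) $$ (i,j) = (\<Sum>l<k. A$$(i,l) * B$$(l,j))"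
  by (auto simp: scalar_prod_def atLeast0LessThan intro!: sum.cong)

lemma adj_adj: "A \<in> carrier_mat r c \<Longrightarrow> mat_adjoint (mat_adjoint (A::complex mat)) = A"
  by (rule eq_matI) auto

lemma adj_mult: assumes A: "A \<in> carrier_mat r k" and B: "(B::complex mat) \<in> carrier_mat k c"
  shows "mat_adjoint (A * B) = mat_adjoint B * mat_adjoint A"
proof (rule eq_matI)
  have AB: "A * B \<in> carrier_mat r c" using A B by simp
  show "dim_row (mat_adjoint (A * B)) = dim_row (mat_adjoint B * mat_adjoint A)"
    using adj_carrier[OF AB] adj_carrier[OF B] by simp
  show "dim_col (mat_adjoint (A * B)) = dim_col (mat_adjoint B * mat_adjoint A)"
    using adj_carrier[OF AB] adj_carrier[OF A] by simp
  fix i j assume "i < dim_row (mat_adjoint B * mat_adjoint A)" "j < dim_col (mat_adjoint B * mat_adjoint A)"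
  then have i: "i < c" and j: "j < r" using adj_carrier[OF A] adj_carrier[OF B] by auto
  show "mat_adjoint (A * B) $$ (i, j) = (mat_adjoint B * mat_adjoint A) $$ (i, j)"
    using i j A B AB
    by (simp add: adj_idx[OF AB i j] mult_idx[OF adj_carrier[OF B] adj_carrier[OF A] i j] mult_idx[OF A B j i]
        adj_idx[OF A] adj_idx[OF B] mult.commute)
qed

definition sw :: "nat \<Rightarrow> nat \<Rightarrow> nat" where "sw m i = (if i = 0 then m else if i = m then 0 else i)"

lemma P_idx: "i < n \<Longrightarrow> j < n \<Longrightarrow> swap_perm_mat n m $$ (i,j) = (if j = sw m i then 1 else 0)"
  unfolding swap_perm_mat_def sw_def by auto

lemma P_carrier: "swap_perm_mat n m \<in> carrier_mat n n"
  unfolding swap_perm_mat_def by auto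
lemma P_dim[simp]: "dim_row (swap_perm_mat n m) = n" "dim_col (swap_perm_mat n m) = n"
  unfolding swap_perm_mat_def by auto

lemma sw_lt: "m < n \<Longrightarrow> i < n \<Longrightarrow> sw m i < n" unfolding sw_def by auto
lemma sw_sw: "sw m (sw m i) = i" unfolding sw_def by auto

lemma P_adj: assumes "m < n" shows "mat_adjoint (swap_perm_mat n m) = swap_perm_mat n m"
  by (rule eq_matI) (auto simp: P_idx sw_def)

lemma P_sq: assumes m: "m < n" shows "swap_perm_mat n m * swap_perm_mat n m = 1\<^sub>m n"
proof (rule eq_matI)
  fix i j assume "i < dim_row (1\<^sub>m n)" "j < dim_col (1\<^sub>m n)"
  then have i: "i < n" and j: "j < n" by auto
  have "(swap_perm_mat n m * swap_perm_mat n m) $$ (i,j) =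
     (\<Sum>l<n. swap_perm_mat n m $$ (i,l) * swap_perm_mat n m $$ (l,j))"
    by (rule mult_idx[OF P_carrier P_carrier i j])
  also have "\<dots> = swap_perm_mat n m $$ (sw m i,j) * 1"
    by (rule trans[OF sum_single[where a="sw m i"]]) (auto simp: P_idx i j sw_lt[OF m i])
  also have "\<dots> = (if i = j then 1 else 0)" using sw_lt[OF m i] j
    by (auto simp: P_idx sw_sw)
  finally show "(swap_perm_mat n m * swap_perm_mat n m) $$ (i,j) = 1\<^sub>m n $$ (i,j)" using i j by simp
qed (auto simp: P_carrier[THEN carrier_matD(1)] P_carrier[THEN carrier_matD(2)])

lemma C_carrier: "chiral_op n \<in> carrier_mat n n" unfolding chiral_op_def by auto
lemma C_dim[simp]: "dim_row (chiral_op n) = n" "dim_col (chiral_op n) = n"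
  unfolding chiral_op_def by auto
lemma C_idx: "i < n \<Longrightarrow> j < n \<Longrightarrow> chiral_op n $$ (i,j) = (if i = j then (if even i then 1 else -1) else 0)"
  unfolding chiral_op_def by auto
lemma C_adj: "mat_adjoint (chiral_op n) = chiral_op n"
  by (rule eq_matI) (auto simp: C_idx)


lemma Vs_col0:
  fixes Vs :: "complex mat"
  assumes Vs: "Vs \<in> carrier_mat n n" and u: "mat_adjoint Vs * Vs = 1\<^sub>m n" and f: "Vs $$ (0,0) = 1"
    and n: "0 < n" and l: "l < n"
  shows "Vs $$ (l,0) = (if l = 0 then 1 else 0)"
proof -
  have "(mat_adjoint Vs * Vs) $$ (0,0) = (\<Sum>j<n. mat_adjoint Vs $$ (0,j) * Vs $$ (j,0))"
    by (rule mult_idx[OF adj_carrier[OF Vs] Vs n n])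
  also have "\<dots> = (\<Sum>j<n. complex_of_real ((cmod (Vs $$ (j,0)))\<^sup>2))"
    using Vs by (intro sum.cong) (auto, metis complex_norm_square mult.commute of_real_power)
  finally have "(\<Sum>j<n. complex_of_real ((cmod (Vs $$ (j,0)))\<^sup>2)) = 1" using u n by simp
  then have e: "(\<Sum>j<n. (cmod (Vs $$ (j,0)))\<^sup>2) = 1"
    by (metis of_real_eq_1_iff of_real_sum)
  have "(\<Sum>j<n. (cmod (Vs $$ (j,0)))\<^sup>2) = (cmod (Vs $$ (0,0)))\<^sup>2 + (\<Sum>j\<in>{..<n}-{0}. (cmod (Vs $$ (j,0)))\<^sup>2)"
    using n by (simp add: sum.remove)
  then have "(\<Sum>j\<in>{..<n}-{0}. (cmod (Vs $$ (j,0)))\<^sup>2) = 0" using e f by simp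
  then have "\<forall>j\<in>{..<n}-{0}. (cmod (Vs $$ (j,0)))\<^sup>2 = 0"
    by (subst (asm) sum_nonneg_eq_0_iff) auto
  then show ?thesis using l f by auto
qed

theorem theorem1:
  fixes H Vs :: "complex mat" and n m :: nat
  assumes chiral: "chiral_symmetric n H"
    and anchor: "m < n"
    and unit: "unitary_mat n Vs"
    and first: "Vs $$ (0,0) = 1"
    and tri: "tridiagonal n (mat_adjoint Vs * (mat_adjoint (swap_perm_mat n m) * H * swap_perm_mat n m) * Vs)"
    and nontriv: "nonzero_subdiagonal n (mat_adjoint Vs * (mat_adjoint (swap_perm_mat n m) * H * swap_perm_mat n m) * Vs)"
  shows "\<forall>i<n. (mat_adjoint Vs * (mat_adjoint (swap_perm_mat n m) * H * swap_perm_mat n m) * Vs) $$ (i,i) = 0"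
proof -
  define P where "P = swap_perm_mat n m"
  define C where "C = chiral_op n"
  define U where "U = P * Vs"
  define AU where "AU = mat_adjoint U"
  define T where "T = mat_adjoint Vs * (mat_adjoint P * H * P) * Vs"
  define G where "G = AU * C * U"
  have n: "0 < n" using anchor by simp
  have H: "H \<in> carrier_mat n n" and Hh: "mat_adjoint H = H" and CH: "C * H = - (H * C)"
    using chiral unfolding chiral_symmetric_def hermitian_mat_def C_def by auto
  have Vs: "Vs \<in> carrier_mat n n" and Vu1: "mat_adjoint Vs * Vs = 1\<^sub>m n" and Vu2: "Vs * mat_adjoint Vs = 1\<^sub>m n"
    using unit unfolding unitary_mat_def by auto
  have AVs: "mat_adjoint Vs \<in> carrier_mat n n" using adj_carrier[OF Vs] .
  have P: "P \<in> carrier_mat n n" unfolding P_def by (rule P_carrier)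
  have PA: "mat_adjoint P = P" unfolding P_def using P_adj[OF anchor] .
  have PP: "P * P = 1\<^sub>m n" unfolding P_def using P_sq[OF anchor] .
  have C: "C \<in> carrier_mat n n" unfolding C_def by (rule C_carrier)
  have CA: "mat_adjoint C = C" unfolding C_def by (rule C_adj)
  have U: "U \<in> carrier_mat n n" unfolding U_def using P Vs by simp
  have AUe: "AU = mat_adjoint Vs * P" unfolding AU_def U_def using adj_mult[OF P Vs] PA by simp
  have AU: "AU \<in> carrier_mat n n" using AUe AVs P by simp
  have UAU: "U * AU = 1\<^sub>m n"
  proof -
    have "U * AU = P * (Vs * (mat_adjoint Vs * P))" unfolding U_def AUe
      by (rule assoc_mult_mat[OF P Vs]) (rule mult_carrier_mat[OF AVs P])
    also have "Vs * (mat_adjoint Vs * P) = (Vs * mat_adjoint Vs) * P" by (rule assoc_mult_mat[OF Vs AVs P, symmetric])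
    also have "P * ((Vs * mat_adjoint Vs) * P) = 1\<^sub>m n" using Vu2 PP P by simp
    finally show ?thesis .
  qed
  have AUU: "AU * U = 1\<^sub>m n"
  proof -
    have "AU * U = mat_adjoint Vs * (P * (P * Vs))" unfolding U_def AUe
      by (rule assoc_mult_mat[OF AVs P]) (rule mult_carrier_mat[OF P Vs])
    also have "P * (P * Vs) = (P * P) * Vs" by (rule assoc_mult_mat[OF P P Vs, symmetric])
    also have "mat_adjoint Vs * ((P * P) * Vs) = 1\<^sub>m n" using Vu1 PP AVs Vs by simp
    finally show ?thesis .
  qed
  have Te: "T = AU * H * U" unfolding T_def AUe U_def PA using P Vs AVs H
    by (simp add: assoc_mult_mat[of _ n n _ n _ n])
  have T: "T \<in> carrier_mat n n" using Te AU H U by simp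
  have G: "G \<in> carrier_mat n n" unfolding G_def using AU C U by simp
  have GT: "G * T = - (T * G)"
  proof -
    have "G * T = AU * (C * (U * AU) * H) * U" unfolding G_def Te using AU C U H
      by (simp add: assoc_mult_mat[of _ n n _ n _ n])
    also have "\<dots> = AU * (C * H) * U" using UAU C by simp
    also have "\<dots> = - (AU * (H * C) * U)" using CH AU H C U by simp
    also have "AU * (H * C) * U = AU * (H * (U * AU) * C) * U" using UAU H by simp
    also have "\<dots> = T * G" unfolding G_def Te using AU C U H
      by (simp add: assoc_mult_mat[of _ n n _ n _ n])
    finally show ?thesis .
  qed
  have GA: "mat_adjoint G = G"
  proof -
    have "mat_adjoint G = mat_adjoint U * mat_adjoint (AU * C)" unfolding G_def
      using adj_mult[of "AU * C" n n U n] AU C U by simp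
    also have "\<dots> = AU * (mat_adjoint C * mat_adjoint AU)" unfolding AU_def
      using adj_mult[of "mat_adjoint U" n n C n] adj_carrier[OF U] C by simp
    also have "\<dots> = G" unfolding G_def CA AU_def adj_adj[OF U] using adj_carrier[OF U] C U by simp
    finally show ?thesis .
  qed
  define s :: complex where "s = (if even m then 1 else -1)"
  have U0: "U $$ (j,0) = (if j = m then 1 else 0)" if j: "j < n" for j
  proof -
    have "U $$ (j,0) = (\<Sum>l<n. P $$ (j,l) * Vs $$ (l,0))" unfolding U_def by (rule mult_idx[OF P Vs j n])
    also have "\<dots> = P $$ (j,0) * Vs $$ (0,0)"
      by (rule sum_single) (use Vs_col0[OF Vs Vu1 first n] n in auto)
    also have "\<dots> = (if j = m then 1 else 0)" unfolding P_def using first j n anchor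
      by (auto simp: P_idx sw_def)
    finally show ?thesis .
  qed
  have Um: "U $$ (m,i) = (if i = 0 then 1 else 0)" if i: "i < n" for i
  proof -
    have "(AU * U) $$ (i,0) = (\<Sum>j<n. AU $$ (i,j) * U $$ (j,0))" by (rule mult_idx[OF AU U i n])
    also have "\<dots> = AU $$ (i,m) * 1"
      by (rule trans[OF sum_single[where a=m]]) (use U0 anchor in auto)
    also have "\<dots> = cnj (U $$ (m,i))" unfolding AU_def using adj_idx[OF U i anchor] by simp
    finally have "cnj (U $$ (m,i)) = (if i = 0 then 1 else 0)" using AUU i n by simp
    then show ?thesis by (metis complex_cnj_cnj complex_cnj_one complex_cnj_zero)
  qed
  have col0: "G $$ (i,0) = (if i = 0 then s else 0)" if i: "i < n" for i
  proof -
    have CU: "(C * U) $$ (j,0) = (if j = m then s else 0)" if j: "j < n" for j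
    proof -
      have "(C * U) $$ (j,0) = (\<Sum>l<n. C $$ (j,l) * U $$ (l,0))" by (rule mult_idx[OF C U j n])
      also have "\<dots> = C $$ (j,m) * 1"
        by (rule trans[OF sum_single[where a=m]]) (use U0 anchor in auto)
      also have "\<dots> = (if j = m then s else 0)" unfolding C_def s_def using j anchor by (simp add: C_idx)
      finally show ?thesis .
    qed
    have "G $$ (i,0) = (AU * (C * U)) $$ (i,0)" unfolding G_def using AU C U by simp
    also have "\<dots> = (\<Sum>j<n. AU $$ (i,j) * (C * U) $$ (j,0))"
      by (rule mult_idx[OF AU _ i n]) (use C U in simp)
    also have "\<dots> = AU $$ (i,m) * s"
      by (rule trans[OF sum_single[where a=m]]) (use CU anchor in auto)
    also have "\<dots> = (if i = 0 then s else 0)" unfolding AU_def using adj_idx[OF U i anchor] Um[OF i] by simp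
    finally show ?thesis .
  qed
  have "\<forall>k<n. T$$(k,k) = 0"
  proof (rule key[where G=G and s=s])
    fix i k assume i: "i < n" and k: "k < n"
    have "(G*T) $$ (i,k) = (- (T*G)) $$ (i,k)" using GT by simp
    then show "(\<Sum>j<n. G$$(i,j)*T$$(j,k)) = - (\<Sum>j<n. T$$(i,j)*G$$(j,k))"
      using mult_idx[OF G T i k] mult_idx[OF T G i k] i k G T by simp
  next
    fix i j assume i: "i < n" and j: "j < n"
    show "G$$(i,j) = cnj (G$$(j,i))" using adj_idx[OF G i j] GA by simp
  next
    fix i j assume "i < n" "j < n" "j > i+1 \<or> i > j+1"
    then show "T$$(i,j) = 0" using tri unfolding tridiagonal_def T_def P_def by blast
  next
    fix i assume "i+1 < n"
    then show "T$$(i+1,i) \<noteq> 0" using nontriv unfolding nonzero_subdiagonal_def T_def P_def by blast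
  next
    fix i assume "i < n" then show "G$$(i,0) = (if i=0 then s else 0)" by (rule col0)
  qed (simp add: s_def)
  then show ?thesis unfolding T_def P_def .
qed

end
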